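(* Let $\mathcal{A}$ be a central arrangement of rank $r$ and let $\pi=(\pi_1,\ldots,\pi_r)$ be a factorization of $\mathcal{A}$. Suppose $Z\in L(\mathcal{A})$ is modular of rank $r-1$ with $\pi_1=\mathcal{A}\setminus\mathcal{A}_Z$. Then every $H\in\pi_1$ is distinguished with respect to $\pi$. In particular, for $H_0\in\pi_1$ with triple $(\mathcal{A},\mathcal{A}',\mathcal{A}'')$, the restriction map $\mathrm{R}:\mathcal{A}_Z\to\mathcal{A}''$, $H\mapsto H\cap H_0$, is bijective.
   Context: A central arrangement is a finite set of linear hyperplanes in $V=\mathbb{K}^\ell$ ($\mathbb{K}$ a field); its rank is the codimension of the intersection of all its members. $L(\mathcal{A})$ is the set of intersections of subsets of $\mathcal{A}$ ($V$ included), with rank $r(X)=\operatorname{codim}X$; $\mathcal{A}_X=\{H\in\mathcal{A}\mid X\subseteq H\}$. $X\in L(\mathcal{A})$ is modular if $X+Y\in L(\mathcal{A})$ for all $Y\in L(\mathcal{A})$. A partition $\pi=(\pi_1,\ldots,\pi_s)$ is a factorization (nice) if it is independent (for every choice $H_i\in\pi_i$, $\operatorname{codim}(H_1\cap\cdots\cap H_s)=s$) and for every $X\in L(\mathcal{A})\setminus\{V\}$ some non-empty set $\pi_i\cap\mathcal{A}_X$ is a singleton. For $H_0\in\pi_1$ the triple is $\mathcal{A}'=\mathcal{A}\setminus\{H_0\}$, $\mathcal{A}''=\{H_0\cap H\mid H\in\mathcal{A}'\}$; $H_0$ is distinguished with respect to $\pi$ if the non-empty sets $\pi_i\cap\mathcal{A}'$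 form a factorization of $\mathcal{A}'$. *)

theory Defs
  imports Complex_Main "HOL-Library.Function_Algebras"
begin

text \<open>The ambient space V = K^l is modelled as functions 'n \<Rightarrow> 'a with 'n finite
 (l = CARD('n)) and 'a a field, with pointwise scalar multiplication.\<close>

definition vscale :: "'a::field \<Rightarrow> ('n \<Rightarrow> 'a) \<Rightarrow> ('n \<Rightarrow> 'a)" where
  "vscale c x = (\<lambda>i. c * x i)"

lemma vscale_vector_space: "vector_space (vscale :: 'a::field \<Rightarrow> ('n \<Rightarrow> 'a) \<Rightarrow> _)"
  by unfold_locales (auto simp: vscale_def algebra_simps fun_eq_iff)

definition codim :: "('n::finite \<Rightarrow> 'a::field) set \<Rightarrow> nat" where
  "codim X = card (UNIV :: 'n set) - vector_space.dim (vscale :: 'a \<Rightarrow> ('n \<Rightarrow> 'a) \<Rightarrow> _) X"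

definition lin_hyperplane :: "('n::finite \<Rightarrow> 'a::field) set \<Rightarrow> bool" where
  "lin_hyperplane H \<longleftrightarrow> (\<exists>c. c \<noteq> 0 \<and> H = {x. (\<Sum>i\<in>UNIV. c i * x i) = 0})"

definition central_arrangement :: "('n::finite \<Rightarrow> 'a::field) set set \<Rightarrow> bool" where
  "central_arrangement A \<longleftrightarrow> finite A \<and> (\<forall>H\<in>A. lin_hyperplane H)"

text \<open>Intersection lattice; the empty intersection is V.\<close>
definition lattice_L :: "('n::finite \<Rightarrow> 'a::field) set set \<Rightarrow> ('n \<Rightarrow> 'a) set set" where
  "lattice_L A = {\<Inter>B | B. B \<subseteq> A}"

definition arr_rank :: "('n::finite \<Rightarrow> 'a::field) set set \<Rightarrow> nat" where
  "arr_rank A = codim (\<Inter>A)"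

definition loc :: "('n::finite \<Rightarrow> 'a::field) set set \<Rightarrow> ('n \<Rightarrow> 'a) set \<Rightarrow> ('n \<Rightarrow> 'a) set set" where
  "loc A X = {H \<in> A. X \<subseteq> H}"

definition subspace_sum :: "('n \<Rightarrow> 'a::field) set \<Rightarrow> ('n \<Rightarrow> 'a) set \<Rightarrow> ('n \<Rightarrow> 'a) set" where
  "subspace_sum X Y = {x + y | x y. x \<in> X \<and> y \<in> Y}"

definition modular :: "('n::finite \<Rightarrow> 'a::field) set set \<Rightarrow> ('n \<Rightarrow> 'a) set \<Rightarrow> bool" where
  "modular A X \<longleftrightarrow> X \<in> lattice_L A \<and> (\<forall>Y\<in>lattice_L A. subspace_sum X Y \<in> lattice_L A)"

definition is_partition :: "'b set \<Rightarrow> 'b set list \<Rightarrow> bool" where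
  "is_partition A ps \<longleftrightarrow> (\<forall>i<length ps. ps ! i \<noteq> {}) \<and>
     (\<forall>i<length ps. \<forall>j<length ps. i \<noteq> j \<longrightarrow> ps ! i \<inter> ps ! j = {}) \<and> \<Union>(set ps) = A"

definition independent_part :: "('n::finite \<Rightarrow> 'a::field) set set list \<Rightarrow> bool" where
  "independent_part ps \<longleftrightarrow>
     (\<forall>Hs. (\<forall>i<length ps. Hs i \<in> ps ! i) \<longrightarrow> codim (\<Inter>i\<in>{..<length ps}. Hs i) = length ps)"

definition factorization :: "('n::finite \<Rightarrow> 'a::field) set set \<Rightarrow> ('n \<Rightarrow> 'a) set set list \<Rightarrow> bool" where
  "factorization A ps \<longleftrightarrow> is_partition A ps \<and> independent_part ps \<and>
     (\<forall>X\<in>lattice_L A - {UNIV}. \<exists>i<length ps. card (ps ! i \<inter> loc A X) = 1)"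

definition distinguished :: "('n::finite \<Rightarrow> 'a::field) set set \<Rightarrow> ('n \<Rightarrow> 'a) set set list \<Rightarrow> ('n \<Rightarrow> 'a) set \<Rightarrow> bool" where
  "distinguished A ps H0 \<longleftrightarrow>
     factorization (A - {H0}) (filter (\<lambda>b. b \<noteq> {}) (map (\<lambda>b. b - {H0}) ps))"

definition restr_arr :: "('n::finite \<Rightarrow> 'a::field) set set \<Rightarrow> ('n \<Rightarrow> 'a) set \<Rightarrow> ('n \<Rightarrow> 'a) set set" where
  "restr_arr A H0 = {H0 \<inter> H | H. H \<in> A - {H0}}"

end

theory Submission
  imports Defs
begin


lemma sum_fun_app: "(\<Sum>i\<in>S. f i) j = (\<Sum>i\<in>S. f i j)"
  by (induction S rule: infinite_finite_induct) auto

definition stdB :: "('n::finite \<Rightarrow> 'a::field) set" where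
  "stdB = range (\<lambda>i j. if j = i then 1 else 0)"

lemma stdB_indep: "\<not> module.dependent vscale (stdB :: ('n::finite \<Rightarrow> 'a::field) set)"
proof -
  interpret V: vector_space "vscale :: 'a \<Rightarrow> ('n \<Rightarrow> 'a) \<Rightarrow> _" by (rule vscale_vector_space)
  show ?thesis
    unfolding V.dependent_def
  proof
    assume "\<exists>a\<in>stdB. a \<in> V.span (stdB - {a})"
    then obtain i where i: "(\<lambda>j. if j = i then 1 else 0) \<in> V.span (stdB - {(\<lambda>j. if j = i then (1::'a) else 0)})"
      unfolding stdB_def by auto
    have sub: "V.subspace {x::'n\<Rightarrow>'a. x i = 0}"
      by (auto simp: V.subspace_def vscale_def)
    have "stdB - {(\<lambda>j. if j = i then (1::'a) else 0)} \<subseteq> {x::'n\<Rightarrow>'a. x i = 0}"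
      by (auto simp: stdB_def fun_eq_iff)
    then have "V.span (stdB - {(\<lambda>j. if j = i then (1::'a) else 0)}) \<subseteq> {x. x i = 0}"
      using V.span_minimal sub by blast
    with i show False by auto
  qed
qed

lemma stdB_span: "module.span vscale (stdB :: ('n::finite \<Rightarrow> 'a::field) set) = UNIV"
proof -
  interpret V: vector_space "vscale :: 'a \<Rightarrow> ('n \<Rightarrow> 'a) \<Rightarrow> _" by (rule vscale_vector_space)
  have "x \<in> V.span stdB" for x :: "'n \<Rightarrow> 'a"
  proof -
    have "x = (\<Sum>i\<in>UNIV. vscale (x i) (\<lambda>j. if j = i then 1 else 0))"
      by (auto simp: fun_eq_iff vscale_def sum_fun_app if_distrib cong: if_cong)
    also have "\<dots> \<in> V.span stdB"
      by (intro V.span_sum V.span_scale V.span_base) (auto simp: stdB_def)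
    finally show ?thesis .
  qed
  then show ?thesis by auto
qed

interpretation V: finite_dimensional_vector_space "vscale :: 'a::field \<Rightarrow> ('n::finite \<Rightarrow> 'a) \<Rightarrow> _" "stdB"
  by (rule finite_dimensional_vector_space.intro[OF vscale_vector_space])
     (unfold_locales, simp add: stdB_def, use stdB_indep in blast, use stdB_span in blast)

lemma card_stdB: "card (stdB :: ('n::finite \<Rightarrow> 'a::field) set) = card (UNIV :: 'n set)"
  unfolding stdB_def
  by (rule card_image) (auto simp: inj_on_def fun_eq_iff split: if_splits)

lemma dim_UNIV': "V.dim (UNIV :: ('n::finite \<Rightarrow> 'a::field) set) = card (UNIV :: 'n set)"
  using card_stdB by simp

lemma dim_le_l: "V.dim (X :: ('n::finite \<Rightarrow> 'a::field) set) \<le> card (UNIV :: 'n set)"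
  using V.dim_subset_UNIV card_stdB unfolding V.dimension_def by metis

lemma codim_eq: "codim (X :: ('n::finite \<Rightarrow> 'a::field) set) = card (UNIV :: 'n set) - V.dim X"
  unfolding codim_def by simp

lemma hyp_subspace:
  assumes "lin_hyperplane (H :: ('n::finite \<Rightarrow> 'a::field) set)"
  shows "V.subspace H"
proof -
  obtain c where H: "H = {x. (\<Sum>i\<in>UNIV. c i * x i) = 0}" using assms lin_hyperplane_def by blast
  show ?thesis unfolding H V.subspace_def
    by (auto simp: vscale_def distrib_left sum.distrib mult.left_commute[of "c _"] sum_distrib_left[symmetric])
qed

lemma hyp_dim:
  assumes "lin_hyperplane (H :: ('n::finite \<Rightarrow> 'a::field) set)"
  shows "V.dim H + 1 = card (UNIV :: 'n set)"
proof -
  obtain c where c: "c \<noteq> 0" and H: "H = {x. (\<Sum>i\<in>UNIV. c i * x i) = 0}"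
    using assms lin_hyperplane_def by blast
  obtain i where ci: "c i \<noteq> 0" using c by (auto simp: fun_eq_iff)
  define v :: "'n \<Rightarrow> 'a" where "v = (\<lambda>j. if j = i then 1 else 0)"
  define f where "f = (\<lambda>x::'n\<Rightarrow>'a. \<Sum>j\<in>UNIV. c j * x j)"
  have fv: "f v = c i" by (simp add: f_def v_def if_distrib cong: if_cong)
  have flin: "f (x - vscale t v) = f x - t * c i" for x t
    by (simp add: f_def vscale_def algebra_simps sum_subtractf sum_distrib_left[symmetric] fv[unfolded f_def, symmetric])
  have v0: "v \<noteq> 0" by (auto simp: v_def fun_eq_iff)
  have sub: "V.subspace H" by (rule hyp_subspace[OF assms])
  have subv: "V.subspace (V.span {v})" by simp
  have "V.dim {x + y |x y. x \<in> H \<and> y \<in> V.span {v}} + V.dim (H \<inter> V.span {v}) = V.dim H + V.dim (V.span {v})"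
    by (rule V.dim_sums_Int[OF sub subv])
  moreover have "{x + y |x y. x \<in> H \<and> y \<in> V.span {v}} = UNIV"
  proof (intro antisym subset_UNIV subsetI CollectI)
    fix x :: "'n \<Rightarrow> 'a"
    define t where "t = f x / c i"
    have "x = (x - vscale t v) + vscale t v" by simp
    moreover have "x - vscale t v \<in> H" using flin[of x t] ci unfolding H t_def by (simp add: f_def)
    moreover have "vscale t v \<in> V.span {v}" by (intro V.span_scale V.span_base) simp
    ultimately show "\<exists>a b. x = a + b \<and> a \<in> H \<and> b \<in> V.span {v}" by blast
  qed
  moreover have "H \<inter> V.span {v} \<subseteq> {0}"
  proof
    fix y assume y: "y \<in> H \<inter> V.span {v}"
    then obtain t where t: "y = vscale t v" by (auto simp: V.span_singleton)
    have "f y = t * c i" using flin[of 0 t] by (simp add: t f_def sum_negf)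
    moreover have "f y = 0" using y by (simp add: H f_def)
    ultimately have "t = 0" using ci by simp
    then show "y \<in> {0}" by (simp add: t vscale_def fun_eq_iff)
  qed
  then have "V.dim (H \<inter> V.span {v}) = 0" using V.dim_eq_0 by blast
  moreover have "V.dim (UNIV :: ('n\<Rightarrow>'a) set) = card (UNIV :: 'n set)" by (rule dim_UNIV')
  moreover have "V.dim (V.span {v}) = 1" using v0 by simp
  ultimately show ?thesis by simp
qed

lemma dimUNIV: "V.dim (UNIV :: ('n::finite\<Rightarrow>'a::field) set) = card (UNIV :: 'n set)" by (rule dim_UNIV')

lemma dim_full_eq:
  assumes "V.subspace (W :: ('n::finite \<Rightarrow> 'a::field) set)" "card (UNIV :: 'n set) \<le> V.dim W"
  shows "W = UNIV"
  using V.subspace_dim_equal[OF assms(1) V.subspace_UNIV subset_UNIV] assms(2) unfolding dimUNIV by simp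

lemma super_hyp:
  assumes "lin_hyperplane (H :: ('n::finite \<Rightarrow> 'a::field) set)" "V.subspace W" "H \<subseteq> W" "\<not> W \<subseteq> H"
  shows "W = UNIV"
proof -
  have e1: "V.span H = H" using hyp_subspace[OF assms(1)] V.span_eq_iff by blast
  have e2: "V.span W = W" using assms(2) V.span_eq_iff by blast
  have "H \<subset> W" using assms(3,4) by blast
  then have "V.span H \<subset> V.span W" unfolding e1 e2 .
  then have "V.dim H < V.dim W" by (rule V.dim_psubset)
  then show ?thesis using hyp_dim[OF assms(1)] dim_full_eq[OF assms(2)] by simp
qed

lemma hyp_ne_UNIV:
  assumes "lin_hyperplane (H :: ('n::finite \<Rightarrow> 'a::field) set)"
  shows "H \<noteq> UNIV"
proof
  assume "H = UNIV"
  have "V.dim H + 1 = card (UNIV :: 'n set)" by (rule hyp_dim[OF assms])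
  moreover have "V.dim (UNIV :: ('n\<Rightarrow>'a) set) = card (UNIV :: 'n set)" by (rule dimUNIV)
  ultimately show False using \<open>H = UNIV\<close> by simp
qed

lemma sum_subspace:
  assumes "V.subspace (S :: ('n::finite \<Rightarrow> 'a::field) set)" "V.subspace T"
  shows "{x + y |x y. x \<in> S \<and> y \<in> T} = V.span (S \<union> T)" "V.subspace {x + y |x y. x \<in> S \<and> y \<in> T}"
proof -
  have e1: "V.span S = S" using assms(1) V.span_eq_iff by blast
  have e2: "V.span T = T" using assms(2) V.span_eq_iff by blast
  show 1: "{x + y |x y. x \<in> S \<and> y \<in> T} = V.span (S \<union> T)"
    using V.span_Un[of S T] unfolding e1 e2 by simp
  show "V.subspace {x + y |x y. x \<in> S \<and> y \<in> T}" unfolding 1 by (rule V.subspace_span)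
qed

lemma sum_sup1: "V.subspace T \<Longrightarrow> S \<subseteq> {x + y |x y. x \<in> S \<and> y \<in> (T :: ('n::finite \<Rightarrow> 'a::field) set)}"
  by (force simp: V.subspace_def)

lemma sum_sup2: "V.subspace S \<Longrightarrow> T \<subseteq> {x + y |x y. x \<in> S \<and> y \<in> (T :: ('n::finite \<Rightarrow> 'a::field) set)}"
  by (force simp: V.subspace_def)

lemma dim_inter_hyp:
  assumes "V.subspace (Y :: ('n::finite \<Rightarrow> 'a::field) set)" "lin_hyperplane H"
  shows "V.dim Y \<le> V.dim (Y \<inter> H) + 1"
    and "\<not> Y \<subseteq> H \<Longrightarrow> V.dim (Y \<inter> H) + 1 = V.dim Y"
proof -
  have sH: "V.subspace H" by (rule hyp_subspace[OF assms(2)])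
  note eq = V.dim_sums_Int[OF assms(1) sH]
  have hd: "V.dim H + 1 = card (UNIV :: 'n set)" by (rule hyp_dim[OF assms(2)])
  have "V.dim {x + y |x y. x \<in> Y \<and> y \<in> H} \<le> card (UNIV :: 'n set)"
    by (rule dim_le_l)
  then show "V.dim Y \<le> V.dim (Y \<inter> H) + 1" using eq hd by linarith
  assume n: "\<not> Y \<subseteq> H"
  have "{x + y |x y. x \<in> Y \<and> y \<in> H} = UNIV"
    apply (rule super_hyp[OF assms(2) sum_subspace(2)[OF assms(1) sH] sum_sup2[OF assms(1)]])
    using sum_sup1[OF sH, of Y] n by blast
  then have "V.dim {x + y |x y. x \<in> Y \<and> y \<in> H} = card (UNIV :: 'n set)"
    using dimUNIV[where 'a='a and 'n='n] by simp
  then show "V.dim (Y \<inter> H) + 1 = V.dim Y" using eq hd by linarith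
qed

lemma hyp_hyp_dim:
  assumes "lin_hyperplane (H :: ('n::finite \<Rightarrow> 'a::field) set)" "lin_hyperplane H'" "H \<noteq> H'"
  shows "V.dim (H \<inter> H') + 2 = card (UNIV :: 'n set)"
proof -
  have "\<not> H \<subseteq> H'"
  proof
    assume "H \<subseteq> H'"
    then have "\<not> H' \<subseteq> H" using assms(3) by blast
    then have "H' = UNIV" using super_hyp[OF assms(1) hyp_subspace[OF assms(2)] \<open>H \<subseteq> H'\<close>] by blast
    then show False using hyp_ne_UNIV[OF assms(2)] by blast
  qed
  then have "V.dim (H \<inter> H') + 1 = V.dim H" by (rule dim_inter_hyp(2)[OF hyp_subspace[OF assms(1)] assms(2)])
  moreover have "V.dim H + 1 = card (UNIV :: 'n set)" by (rule hyp_dim[OF assms(1)])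
  ultimately show ?thesis by linarith
qed

lemma lattice_subspace:
  assumes "central_arrangement (A :: ('n::finite \<Rightarrow> 'a::field) set set)" "X \<in> lattice_L A"
  shows "V.subspace X"
proof -
  obtain B where "X = \<Inter>B" "B \<subseteq> A" using assms(2) lattice_L_def by blast
  then show ?thesis using assms(1) hyp_subspace unfolding central_arrangement_def
    by (metis V.subspace_Inter subset_iff)
qed



lemma is_partition_Cons:
  "is_partition A (P # R) \<longleftrightarrow> P \<noteq> {} \<and> (\<forall>k<length R. R!k \<noteq> {}) \<and> (\<forall>k<length R. P \<inter> R!k = {}) \<and>
     (\<forall>i<length R. \<forall>j<length R. i \<noteq> j \<longrightarrow> R!i \<inter> R!j = {}) \<and> P \<union> \<Union>(set R) = A"
  unfolding is_partition_def
  unfolding length_Cons All_less_Suc2 nth_Cons_0 nth_Cons_Suc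
  by (auto simp: Int_commute) (metis disjoint_iff)+

lemma distinguished_part:
  fixes A :: "('n::finite \<Rightarrow> 'a::field) set set"
  assumes ca: "central_arrangement A"
    and fac: "factorization A (P1 # rest)"
    and H0: "H0 \<in> P1"
    and P1: "P1 = A - loc A Z"
    and cZ: "codim Z = length rest"
    and ZL: "Z \<in> lattice_L A"
  shows "distinguished A (P1 # rest) H0"
proof -
  have part: "is_partition A (P1 # rest)" and ind: "independent_part (P1 # rest)"
    and sing: "\<forall>X\<in>lattice_L A - {UNIV}. \<exists>i<length (P1 # rest). card ((P1 # rest) ! i \<inter> loc A X) = 1"
    using fac unfolding factorization_def by auto
  note pc = part[unfolded is_partition_Cons]
  have restne: "\<forall>k<length rest. rest ! k \<noteq> {}" using pc by blast
  have disj: "\<forall>k<length rest. P1 \<inter> rest ! k = {}" using pc by blast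
  have rdisj: "\<forall>i<length rest. \<forall>j<length rest. i \<noteq> j \<longrightarrow> rest!i \<inter> rest!j = {}" using pc by blast
  have AU: "P1 \<union> \<Union>(set rest) = A" using pc by blast
  have rsubA: "rest ! k \<subseteq> A" if "k < length rest" for k using AU that nth_mem by blast
  have rsub: "rest ! k \<subseteq> loc A Z" if "k < length rest" for k
    using rsubA[OF that] disj that P1 by blast
  have H0r: "H0 \<notin> rest ! k" if "k < length rest" for k using disj that H0 by blast
  have H0A: "H0 \<in> A" using H0 P1 by blast
  have ZH0: "\<not> Z \<subseteq> H0" using H0 P1 unfolding loc_def by blast
  have hypA: "lin_hyperplane H" if "H \<in> A" for H using ca that unfolding central_arrangement_def by blast
  have mapr: "map (\<lambda>b. b - {H0}) rest = rest"
  proof (rule map_idI)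
    fix b assume "b \<in> set rest"
    then obtain k where "k < length rest" "b = rest ! k" by (auto simp: in_set_conv_nth)
    then show "b - {H0} = b" using H0r by auto
  qed
  have filr: "filter (\<lambda>b. b \<noteq> {}) rest = rest"
  proof (rule filter_True, intro ballI)
    fix b assume "b \<in> set rest"
    then obtain k where "k < length rest" "b = rest ! k" by (auto simp: in_set_conv_nth)
    then show "b \<noteq> {}" using restne by auto
  qed
  have psd: "filter (\<lambda>b. b \<noteq> {}) (map (\<lambda>b. b - {H0}) (P1 # rest)) =
      (if P1 - {H0} = {} then rest else (P1 - {H0}) # rest)"
    by (simp add: mapr filr)
  have locd: "loc (A - {H0}) X = loc A X - {H0}" for X unfolding loc_def by blast
  have singc: "\<exists>i<length rest. card (rest ! i \<inter> loc (A - {H0}) X) = 1" if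
      X: "X \<in> lattice_L (A - {H0}) - {UNIV}" and "\<not> (\<exists>H. H \<noteq> H0 \<and> P1 \<inter> loc A X = {H})" for X
  proof -
    obtain B where B: "B \<subseteq> A - {H0}" "X = \<Inter>B" using X lattice_L_def by blast
    have XL: "X \<in> lattice_L A - {UNIV}" using B X unfolding lattice_L_def by blast
    then obtain i where i: "i < Suc (length rest)" "card ((P1 # rest) ! i \<inter> loc A X) = 1" using sing by auto
    show ?thesis
    proof (cases i)
      case 0
      then obtain H where H: "P1 \<inter> loc A X = {H}" using i card_1_singleton_iff[of "P1 \<inter> loc A X"] by auto
      then have "H = H0" using that(2) by blast
      have "Z \<subseteq> b" if "b \<in> B" for b
      proof -
        have "b \<in> A" "b \<noteq> H0" "X \<subseteq> b" using B that by auto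
        then have "b \<notin> P1" using H \<open>H = H0\<close> unfolding loc_def by blast
        then show ?thesis using \<open>b \<in> A\<close> P1 unfolding loc_def by blast
      qed
      then have "Z \<subseteq> X" using B by blast
      moreover have "X \<subseteq> H0" using H \<open>H = H0\<close> unfolding loc_def by blast
      ultimately show ?thesis using ZH0 by blast
    next
      case (Suc k)
      then have k: "k < length rest" using i by simp
      have "rest ! k \<inter> loc (A - {H0}) X = rest ! k \<inter> loc A X" using H0r[OF k] locd by blast
      then show ?thesis using i Suc k by auto
    qed
  qed
  show ?thesis unfolding distinguished_def psd
  proof (cases "P1 - {H0} = {}")
    case True
    have P1e: "P1 = {H0}" using True H0 by blast
    have H0U: "H0 \<notin> \<Union>(set rest)" using H0r by (auto simp: in_set_conv_nth)
    have "is_partition (A - {H0}) rest"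
      unfolding is_partition_def using restne rdisj AU P1e H0U by blast
    moreover have "independent_part rest"
      unfolding independent_part_def
    proof (intro allI impI)
      fix Hs assume Hs: "\<forall>i<length rest. Hs i \<in> rest ! i"
      define m where "m = length rest"
      define G where "G = (\<lambda>i. case i of 0 \<Rightarrow> H0 | Suc k \<Rightarrow> Hs k)"
      have "\<forall>i<length (P1 # rest). G i \<in> (P1 # rest) ! i"
        using Hs H0 by (auto simp: G_def less_Suc_eq_0_disj)
      then have cG: "codim (\<Inter>i\<in>{..<Suc m}. G i) = Suc m" using ind unfolding independent_part_def m_def by auto
      define Y where "Y = (\<Inter>i\<in>{..<m}. Hs i)"
      have GY: "(\<Inter>i\<in>{..<Suc m}. G i) = H0 \<inter> Y"
        unfolding lessThan_Suc_eq_insert_0 Y_def G_def by simp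
      have HsA: "Hs i \<in> A" if "i < m" for i using Hs rsubA that m_def by blast
      have sY: "V.subspace Y" unfolding Y_def
        by (rule V.subspace_Inter) (use HsA hyp_subspace hypA in blast)
      have ZY: "Z \<subseteq> Y" unfolding Y_def using Hs rsub m_def unfolding loc_def by blast
      have d1: "V.dim Y \<le> V.dim (Y \<inter> H0) + 1" by (rule dim_inter_hyp(1)[OF sY hypA[OF H0A]])
      have d2: "V.dim Z \<le> V.dim Y" using ZY by (rule V.dim_subset)
      have d3: "V.dim (Y \<inter> H0) \<le> card (UNIV :: 'n set)" by (rule dim_le_l)
      have d4: "V.dim Z \<le> card (UNIV :: 'n set)" by (rule dim_le_l)
      have c1: "card (UNIV :: 'n set) - V.dim (Y \<inter> H0) = Suc m"
        using cG unfolding GY codim_eq by (simp add: Int_commute)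
      have c2: "card (UNIV :: 'n set) - V.dim Z = m" using cZ unfolding codim_eq m_def .
      have "card (UNIV :: 'n set) - V.dim Y = m" using d1 d2 d3 d4 c1 c2 by linarith
      then show "codim (\<Inter>i\<in>{..<length rest}. Hs i) = length rest"
        unfolding codim_eq Y_def m_def .
    qed
    moreover have "\<forall>X\<in>lattice_L (A - {H0}) - {UNIV}. \<exists>i<length rest. card (rest ! i \<inter> loc (A - {H0}) X) = 1"
      using singc P1e by blast
    ultimately show "factorization (A - {H0}) (if P1 - {H0} = {} then rest else (P1 - {H0}) # rest)"
      using True unfolding factorization_def by simp
  next
    case False
    have H0U: "H0 \<notin> \<Union>(set rest)" using H0r by (auto simp: in_set_conv_nth)
    have "is_partition (A - {H0}) ((P1 - {H0}) # rest)"
      unfolding is_partition_Cons using False restne rdisj AU disj H0U by blast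
    moreover have "independent_part ((P1 - {H0}) # rest)"
      unfolding independent_part_def
    proof (intro allI impI)
      fix Hs assume h: "\<forall>i<length ((P1 - {H0}) # rest). Hs i \<in> ((P1 - {H0}) # rest) ! i"
      have "\<forall>i<length (P1 # rest). Hs i \<in> (P1 # rest) ! i"
      proof (intro allI impI)
        fix i assume "i < length (P1 # rest)"
        then show "Hs i \<in> (P1 # rest) ! i" using h[rule_format, of i] by (cases i) auto
      qed
      then show "codim (\<Inter>i\<in>{..<length ((P1 - {H0}) # rest)}. Hs i) = length ((P1 - {H0}) # rest)"
        using ind unfolding independent_part_def by simp
    qed
    moreover have "\<forall>X\<in>lattice_L (A - {H0}) - {UNIV}. \<exists>i<length ((P1 - {H0}) # rest).
        card (((P1 - {H0}) # rest) ! i \<inter> loc (A - {H0}) X) = 1"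
    proof
      fix X assume X: "X \<in> lattice_L (A - {H0}) - {UNIV}"
      show "\<exists>i<length ((P1 - {H0}) # rest). card (((P1 - {H0}) # rest) ! i \<inter> loc (A - {H0}) X) = 1"
      proof (cases "\<exists>H. H \<noteq> H0 \<and> P1 \<inter> loc A X = {H}")
        case True
        then obtain H where "H \<noteq> H0" "P1 \<inter> loc A X = {H}" by blast
        then have "(P1 - {H0}) \<inter> loc (A - {H0}) X = {H}" using locd by blast
        then show ?thesis by (intro exI[of _ 0]) simp
      next
        case False
        then obtain i where "i < length rest" "card (rest ! i \<inter> loc (A - {H0}) X) = 1"
          using singc X by blast
        then show ?thesis by (intro exI[of _ "Suc i"]) simp
      qed
    qed
    ultimately show "factorization (A - {H0}) (if P1 - {H0} = {} then rest else (P1 - {H0}) # rest)"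
      using False unfolding factorization_def by simp
  qed
qed

lemma bij_part:
  fixes A :: "('n::finite \<Rightarrow> 'a::field) set set"
  assumes ca: "central_arrangement A"
    and rk: "arr_rank A = r" and r1: "1 \<le> r"
    and ZL: "Z \<in> lattice_L A" and md: "modular A Z" and cZ: "codim Z = r - 1"
    and H0A: "H0 \<in> A" and ZH0: "\<not> Z \<subseteq> H0"
  shows "bij_betw (\<lambda>H. H \<inter> H0) (loc A Z) (restr_arr A H0)"
proof -
  let ?l = "card (UNIV :: 'n set)"
  have hypA: "lin_hyperplane H" if "H \<in> A" for H using ca that unfolding central_arrangement_def by blast
  have h0: "lin_hyperplane H0" by (rule hypA[OF H0A])
  have sZ: "V.subspace Z" by (rule lattice_subspace[OF ca ZL])
  have inj: "inj_on (\<lambda>H. H \<inter> H0) (loc A Z)"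
  proof (rule inj_onI)
    fix H H' assume H: "H \<in> loc A Z" and H': "H' \<in> loc A Z" and eq: "H \<inter> H0 = H' \<inter> H0"
    show "H = H'"
    proof (rule ccontr)
      assume ne: "H \<noteq> H'"
      have hH: "lin_hyperplane H" "lin_hyperplane H'" using H H' hypA unfolding loc_def by auto
      have "H \<noteq> H0" using H ZH0 unfolding loc_def by blast
      then have d1: "V.dim (H \<inter> H0) + 2 = ?l" by (rule hyp_hyp_dim[OF hH(1) h0])
      have d2: "V.dim (H \<inter> H') + 2 = ?l" by (rule hyp_hyp_dim[OF hH ne])
      have sub: "H \<inter> H0 \<subseteq> H \<inter> H'" using eq by blast
      have "H \<inter> H0 = H \<inter> H'"
        by (rule V.subspace_dim_equal[OF V.subspace_inter V.subspace_inter sub])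
           (use hH h0 hyp_subspace d1 d2 in auto)
      moreover have "Z \<subseteq> H \<inter> H'" using H H' unfolding loc_def by blast
      ultimately show False using ZH0 by blast
    qed
  qed
  have img: "(\<lambda>H. H \<inter> H0) ` loc A Z = restr_arr A H0"
  proof
    show "(\<lambda>H. H \<inter> H0) ` loc A Z \<subseteq> restr_arr A H0"
      unfolding restr_arr_def loc_def using ZH0 by blast
  next
    show "restr_arr A H0 \<subseteq> (\<lambda>H. H \<inter> H0) ` loc A Z"
    proof
      fix Y assume "Y \<in> restr_arr A H0"
      then obtain H where HA: "H \<in> A" and HH0: "H \<noteq> H0" and Y: "Y = H0 \<inter> H"
        unfolding restr_arr_def by blast
      show "Y \<in> (\<lambda>H. H \<inter> H0) ` loc A Z"
      proof (cases "Z \<subseteq> H")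
        case True
        then show ?thesis using HA Y unfolding loc_def by blast
      next
        case False
        have hH: "lin_hyperplane H" by (rule hypA[OF HA])
        define X where "X = H \<inter> H0"
        define W where "W = subspace_sum Z X"
        have XL: "X \<in> lattice_L A" unfolding X_def lattice_L_def
          using HA H0A by (intro CollectI exI[of _ "{H, H0}"]) auto
        have WL: "W \<in> lattice_L A" using md XL unfolding modular_def W_def by blast
        have sX: "V.subspace X" unfolding X_def using hH h0 hyp_subspace V.subspace_inter by blast
        have sW: "V.subspace W" unfolding W_def subspace_sum_def by (rule sum_subspace(2)[OF sZ sX])
        have dsum: "V.dim W + V.dim (Z \<inter> X) = V.dim Z + V.dim X"
          unfolding W_def subspace_sum_def by (rule V.dim_sums_Int[OF sZ sX])
        have dX: "V.dim X + 2 = ?l" unfolding X_def by (rule hyp_hyp_dim[OF hH h0 HH0])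
        have dZle: "V.dim Z \<le> ?l" by (rule dim_le_l)
        have dZ: "V.dim Z + r = ?l + 1" using cZ dZle r1 unfolding codim_eq by linarith
        have dAle: "V.dim (\<Inter>A) \<le> ?l" by (rule dim_le_l)
        have dA: "V.dim (\<Inter>A) + r = ?l" using rk dAle r1 unfolding arr_rank_def codim_eq by linarith
        have dZH0: "V.dim (Z \<inter> H0) + 1 = V.dim Z" by (rule dim_inter_hyp(2)[OF sZ h0 ZH0])
        obtain B where B: "B \<subseteq> A" "Z = \<Inter>B" using ZL lattice_L_def by blast
        have AZX: "\<Inter>A \<subseteq> Z \<inter> X" using B HA H0A unfolding X_def by blast
        have ZXZ: "Z \<inter> X \<subseteq> Z \<inter> H0" unfolding X_def by blast
        have "V.dim (\<Inter>A) \<le> V.dim (Z \<inter> X)" using AZX by (rule V.dim_subset)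
        moreover have "V.dim (Z \<inter> X) \<le> V.dim (Z \<inter> H0)" using ZXZ by (rule V.dim_subset)
        ultimately have dZX: "V.dim (Z \<inter> X) + r = ?l" using dA dZ dZH0 by linarith
        have dW: "V.dim W + 1 = ?l" using dsum dZX dX dZ by linarith
        obtain B' where B': "B' \<subseteq> A" "W = \<Inter>B'" using WL lattice_L_def by blast
        have "B' \<noteq> {}"
        proof
          assume "B' = {}"
          then have "W = UNIV" using B' by simp
          then show False using dW dimUNIV[where 'a='a and 'n='n] by simp
        qed
        then obtain H' where H': "H' \<in> B'" by blast
        have H'A: "H' \<in> A" using H' B' by blast
        have hH': "lin_hyperplane H'" by (rule hypA[OF H'A])
        have WH': "W \<subseteq> H'" using H' B' by blast
        have "W = H'"
          by (rule V.subspace_dim_equal[OF sW hyp_subspace[OF hH'] WH'])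
             (use hyp_dim[OF hH'] dW in linarith)
        have ZW: "Z \<subseteq> W" unfolding W_def subspace_sum_def by (rule sum_sup1[OF sX])
        have XW: "X \<subseteq> W" unfolding W_def subspace_sum_def by (rule sum_sup2[OF sZ])
        have WH0: "W \<noteq> H0" using ZW ZH0 by blast
        have dWH0: "V.dim (W \<inter> H0) + 2 = ?l"
          using hyp_hyp_dim[OF hH' h0] WH0 \<open>W = H'\<close> by simp
        have XWH0: "X \<subseteq> W \<inter> H0" using XW unfolding X_def by blast
        have "X = W \<inter> H0"
          by (rule V.subspace_dim_equal[OF sX V.subspace_inter[OF sW hyp_subspace[OF h0]] XWH0])
             (use dWH0 dX in linarith)
        moreover have "W \<in> loc A Z" using \<open>W = H'\<close> H'A ZW unfolding loc_def by blast
        ultimately show ?thesis unfolding Y X_def by blast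
      qed
    qed
  qed
  show ?thesis unfolding bij_betw_def using inj img by blast
qed


theorem lemma3p10:
  fixes A :: "('n::finite \<Rightarrow> 'a::field) set set"
    and ps :: "('n \<Rightarrow> 'a) set set list"
    and Z :: "('n \<Rightarrow> 'a) set"
    and r :: nat
  assumes "central_arrangement A"
    and "arr_rank A = r"
    and "1 \<le> r"
    and "length ps = r"
    and "factorization A ps"
    and "Z \<in> lattice_L A"
    and "modular A Z"
    and "codim Z = r - 1"
    and "ps ! 0 = A - loc A Z"
  shows "(\<forall>H\<in>ps ! 0. distinguished A ps H) \<and>
         (\<forall>H0\<in>ps ! 0. bij_betw (\<lambda>H. H \<inter> H0) (loc A Z) (restr_arr A H0))"
proof -
  obtain P1 rest where ps: "ps = P1 # rest" using assms(3,4) by (cases ps) auto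
  have P1: "P1 = A - loc A Z" using assms(9) ps by simp
  have cZ: "codim Z = length rest" using assms(4,8) ps by simp
  have 1: "\<forall>H\<in>ps ! 0. distinguished A ps H"
    using distinguished_part[OF assms(1) assms(5)[unfolded ps] _ P1 cZ assms(6)] ps by simp
  have 2: "\<forall>H0\<in>ps ! 0. bij_betw (\<lambda>H. H \<inter> H0) (loc A Z) (restr_arr A H0)"
  proof
    fix H0 assume "H0 \<in> ps ! 0"
    then have "H0 \<in> A" "\<not> Z \<subseteq> H0" using assms(9) unfolding loc_def by auto
    then show "bij_betw (\<lambda>H. H \<inter> H0) (loc A Z) (restr_arr A H0)"
      by (rule bij_part[OF assms(1,2,3,6,7,8)])
  qed
  show ?thesis using 1 2 by blast
qed

end
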